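(* Let $K\ge1$ and for each $k\in\{1,\dots,K\}$ let $P_{\max,k}>0$, $\mu_k\ge1$, $\Psi_k>0$. Let $q_k^+,q_k^-,c_k^+,c_k^-:\mathbb{R}_+^K\to\mathbb{R}_+$ be differentiable concave functions, and define $$\mathrm{WMEE}(\mathbf p)=\min_{k=1,\dots,K}\frac{q_k^+(\mathbf p)-q_k^-(\mathbf p)}{\mu_kp_k+\Psi_k}.$$ Consider the problem (P): maximize $\mathrm{WMEE}(\mathbf p)$ subject to $0\le p_k\le P_{\max,k}$ and $c_k^+(\mathbf p)-c_k^-(\mathbf p)\ge0$ for all $k$. For a given $\mathbf p_j$, let $\mathcal G_j$ be the problem $$\max_{\mathbf p}\ \min_{k=1,\dots,K}\frac{q_k^+(\mathbf p)-\big[q_k^-(\mathbf p_j)+(\nabla_{\mathbf p}q_k^-(\mathbf p_j))^T(\mathbf p-\mathbf p_j)\big]}{\mu_kp_k+\Psi_k}$$ subject to $0\le p_k\le P_{\max,k}$ and $c_k^+(\mathbf p)-\big[c_k^-(\mathbf p_j)+(\nabla_{\mathbf p}c_k^-(\mathbf p_j))^T(\mathbf p-\mathbf p_j)\big]\ge0$ for all $k$, and let $\mathbf p_j^\star$ denote an optimal solution of $\mathcal G_j$. Let $\mathbf p_0$ be any feasible point of (P) and set $\mathbf p_j=\mathbf p_{j-1}^\star$ for all $j\ge1$. Then the sequence $\{\mathrm{WMEE}(\mathbf p_j^\star)\}_j$ is monotonically increasing and converges.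
   Context: $\nabla_{\mathbf p}f(\mathbf p_j)$ denotes the gradient of $f$ with respect to $\mathbf p$ evaluated at $\mathbf p_j$. The problem (P) models (minimum) energy efficiency maximization, where $q_k^+-q_k^-$ is the achievable rate of link $k$ and $c_k^+-c_k^-\ge0$ are additional constraints. *)

theory Defs
  imports "HOL-Analysis.Analysis"
begin

text \<open>Power vectors live in R^K, indexed by a finite type 'k (K = CARD('k) \<ge> 1).\<close>

definition nonneg_orthant :: "(real ^ 'k) set" where
  "nonneg_orthant = {p. \<forall>k. 0 \<le> p $ k}"

definition WMEE :: "('k::finite \<Rightarrow> real ^ 'k \<Rightarrow> real) \<Rightarrow> ('k \<Rightarrow> real ^ 'k \<Rightarrow> real)
    \<Rightarrow> ('k \<Rightarrow> real) \<Rightarrow> ('k \<Rightarrow> real) \<Rightarrow> real ^ 'k \<Rightarrow> real" where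
  "WMEE qp qm mu Psi p = Min (range (\<lambda>k. (qp k p - qm k p) / (mu k * p $ k + Psi k)))"

definition feasible_P :: "('k \<Rightarrow> real) \<Rightarrow> ('k \<Rightarrow> real ^ 'k \<Rightarrow> real) \<Rightarrow> ('k \<Rightarrow> real ^ 'k \<Rightarrow> real)
    \<Rightarrow> (real ^ 'k) set" where
  "feasible_P Pmax cp cm = {p. \<forall>k. 0 \<le> p $ k \<and> p $ k \<le> Pmax k \<and> cp k p - cm k p \<ge> 0}"

text \<open>Objective of the surrogate problem G_j (around the point pj; gqm is the gradient of qm).\<close>
definition G_obj :: "('k::finite \<Rightarrow> real ^ 'k \<Rightarrow> real) \<Rightarrow> ('k \<Rightarrow> real ^ 'k \<Rightarrow> real)
    \<Rightarrow> ('k \<Rightarrow> real ^ 'k \<Rightarrow> real ^ 'k) \<Rightarrow> ('k \<Rightarrow> real) \<Rightarrow> ('k \<Rightarrow> real)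
    \<Rightarrow> real ^ 'k \<Rightarrow> real ^ 'k \<Rightarrow> real" where
  "G_obj qp qm gqm mu Psi pj p =
     Min (range (\<lambda>k. (qp k p - (qm k pj + gqm k pj \<bullet> (p - pj))) / (mu k * p $ k + Psi k)))"

text \<open>Feasible set of G_j (gcm is the gradient of cm).\<close>
definition feasible_G :: "('k \<Rightarrow> real) \<Rightarrow> ('k \<Rightarrow> real ^ 'k \<Rightarrow> real) \<Rightarrow> ('k \<Rightarrow> real ^ 'k \<Rightarrow> real)
    \<Rightarrow> ('k \<Rightarrow> real ^ 'k \<Rightarrow> real ^ 'k) \<Rightarrow> real ^ 'k \<Rightarrow> (real ^ 'k) set" where
  "feasible_G Pmax cp cm gcm pj = {p. \<forall>k. 0 \<le> p $ k \<and> p $ k \<le> Pmax k \<and>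
      cp k p - (cm k pj + gcm k pj \<bullet> (p - pj)) \<ge> 0}"

end

theory Submission
  imports Defs
begin


lemma concave_tangent:
  fixes f :: "'a::real_inner \<Rightarrow> real"
  assumes cc: "concave_on S f" and x: "x \<in> S" and c: "c \<in> S"
    and d: "(f has_derivative (\<lambda>h. g \<bullet> h)) (at c within S)"
  shows "f x \<le> f c + g \<bullet> (x - c)"
proof -
  define l where "l t = c + t *\<^sub>R (x - c)" for t :: real
  have cvx: "convex S" using cc by (rule concave_on_imp_convex)
  have lS: "l ` {0..1} \<subseteq> S"
  proof
    fix y assume "y \<in> l ` {0..1}"
    then obtain t where t: "t \<in> {0..1}" "y = l t" by auto
    have "(1 - t) *\<^sub>R c + t *\<^sub>R x \<in> S"
      using cvx x c t unfolding convex_def by auto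
    moreover have "(1 - t) *\<^sub>R c + t *\<^sub>R x = l t" by (simp add: l_def algebra_simps)
    ultimately show "y \<in> S" using t by simp
  qed
  have l: "(l has_derivative (\<lambda>t. t *\<^sub>R (x - c))) (at 0 within {0..1})"
    unfolding l_def by (auto intro!: derivative_eq_intros)
  have l0: "l 0 = c" by (simp add: l_def)
  have d': "(f has_derivative (\<lambda>h. g \<bullet> h)) (at (l 0) within (l ` {0..1}))"
    using has_derivative_subset[OF d lS] l0 by simp
  have comp: "((f \<circ> l) has_derivative ((\<lambda>h. g \<bullet> h) \<circ> (\<lambda>t. t *\<^sub>R (x - c)))) (at 0 within {0..1})"
    by (rule diff_chain_within[OF l d'])
  have eq: "((\<lambda>h. g \<bullet> h) \<circ> (\<lambda>t. t *\<^sub>R (x - c))) = (\<lambda>t. t * (g \<bullet> (x - c)))"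
    by (auto simp: fun_eq_iff inner_scaleR_right)
  have "((f \<circ> l) has_field_derivative (g \<bullet> (x - c))) (at 0 within {0..1})"
  proof -
    have "(\<lambda>t. t * (g \<bullet> (x - c))) = (*) (g \<bullet> (x - c))" by (auto simp: fun_eq_iff)
    thus ?thesis using comp unfolding eq has_field_derivative_def by simp
  qed
  hence "((\<lambda>y. ((f \<circ> l) y - (f \<circ> l) 0) / (y - 0)) \<longlongrightarrow> g \<bullet> (x - c)) (at 0 within {0..1})"
    by (simp add: has_field_derivative_iff)
  hence lim: "((\<lambda>y. (f (l y) - f c) / y) \<longlongrightarrow> g \<bullet> (x - c)) (at_right 0)"
    using at_within_Icc_at_right[of "0::real" 1] l0 by simp
  have ev: "eventually (\<lambda>y. f x - f c \<le> (f (l y) - f c) / y) (at_right (0::real))"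
  proof -
    have "eventually (\<lambda>y::real. 0 < y \<and> y < 1) (at_right 0)"
      using eventually_at_right_real[of 0 1] by simp
    thus ?thesis
    proof eventually_elim
      case (elim y)
      have "(1 - y) * f c + y * f x \<le> f ((1 - y) *\<^sub>R c + y *\<^sub>R x)"
        using concave_onD[OF cc, of y c x] elim x c by auto
      moreover have "(1 - y) *\<^sub>R c + y *\<^sub>R x = l y" by (simp add: l_def algebra_simps)
      ultimately have "y * (f x - f c) \<le> f (l y) - f c" by (simp add: algebra_simps)
      thus ?case using elim by (simp add: field_simps)
    qed
  qed
  have "f x - f c \<le> g \<bullet> (x - c)"
    by (rule tendsto_lowerbound[OF lim ev]) simp
  thus ?thesis by simp
qed

lemma Min_range_mono:
  fixes f h :: "'k::finite \<Rightarrow> real"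
  assumes "\<And>k. f k \<le> h k"
  shows "Min (range f) \<le> Min (range h)"
proof -
  have "Min (range h) \<in> range h" by (rule Min_in) auto
  then obtain k where k: "Min (range h) = h k" by (metis imageE)
  have m: "Min (range f) \<le> f k" by (rule Min_le) auto
  show ?thesis using m k assms[of k] by linarith
qed

theorem proposition7:
  fixes Pmax mu Psi :: "'k::finite \<Rightarrow> real"
    and qp qm cp cm :: "'k \<Rightarrow> real ^ 'k \<Rightarrow> real"
    and gqm gcm :: "'k \<Rightarrow> real ^ 'k \<Rightarrow> real ^ 'k"
    and p pstar :: "nat \<Rightarrow> real ^ 'k"
  assumes Pmax_pos: "\<And>k. Pmax k > 0"
    and mu_ge: "\<And>k. mu k \<ge> 1"
    and Psi_pos: "\<And>k. Psi k > 0"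
    and nonneg: "\<And>k x. x \<in> nonneg_orthant \<Longrightarrow>
                   qp k x \<ge> 0 \<and> qm k x \<ge> 0 \<and> cp k x \<ge> 0 \<and> cm k x \<ge> 0"
    and concave: "\<And>k. concave_on nonneg_orthant (qp k) \<and> concave_on nonneg_orthant (qm k)
                   \<and> concave_on nonneg_orthant (cp k) \<and> concave_on nonneg_orthant (cm k)"
    and diff_qp: "\<And>k x. x \<in> nonneg_orthant \<Longrightarrow> qp k differentiable (at x within nonneg_orthant)"
    and diff_cp: "\<And>k x. x \<in> nonneg_orthant \<Longrightarrow> cp k differentiable (at x within nonneg_orthant)"
    and grad_qm: "\<And>k x. x \<in> nonneg_orthant \<Longrightarrow>
                   (qm k has_derivative (\<lambda>h. gqm k x \<bullet> h)) (at x within nonneg_orthant)"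
    and grad_cm: "\<And>k x. x \<in> nonneg_orthant \<Longrightarrow>
                   (cm k has_derivative (\<lambda>h. gcm k x \<bullet> h)) (at x within nonneg_orthant)"
    and p0: "p 0 \<in> feasible_P Pmax cp cm"
    and opt: "\<And>j. pstar j \<in> feasible_G Pmax cp cm gcm (p j) \<and>
               (\<forall>x \<in> feasible_G Pmax cp cm gcm (p j).
                  G_obj qp qm gqm mu Psi (p j) x \<le> G_obj qp qm gqm mu Psi (p j) (pstar j))"
    and step: "\<And>j. p (Suc j) = pstar j"
  shows "incseq (\<lambda>j. WMEE qp qm mu Psi (pstar j)) \<and>
         convergent (\<lambda>j. WMEE qp qm mu Psi (pstar j))"
proof -
  have cvx: "convex (nonneg_orthant :: (real^'k) set)"
    using concave by (meson concave_on_imp_convex)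
  have PO: "feasible_P Pmax cp cm \<subseteq> nonneg_orthant"
    by (auto simp: feasible_P_def nonneg_orthant_def)
  have GO: "\<And>q. feasible_G Pmax cp cm gcm q \<subseteq> nonneg_orthant"
    by (auto simp: feasible_G_def nonneg_orthant_def)
  have tq: "\<And>k x c. x \<in> nonneg_orthant \<Longrightarrow> c \<in> nonneg_orthant \<Longrightarrow> qm k x \<le> qm k c + gqm k c \<bullet> (x - c)"
    using concave grad_qm by (blast intro: concave_tangent)
  have tc: "\<And>k x c. x \<in> nonneg_orthant \<Longrightarrow> c \<in> nonneg_orthant \<Longrightarrow> cm k x \<le> cm k c + gcm k c \<bullet> (x - c)"
    using concave grad_cm by (blast intro: concave_tangent)
  have den: "\<And>k x. x \<in> nonneg_orthant \<Longrightarrow> Psi k \<le> mu k * x $ k + Psi k"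
  proof -
    fix k x assume "x \<in> (nonneg_orthant :: (real^'k) set)"
    hence "0 \<le> x $ k" by (auto simp: nonneg_orthant_def)
    moreover have "0 \<le> mu k" using mu_ge[of k] by linarith
    ultimately show "Psi k \<le> mu k * x $ k + Psi k" by simp
  qed
  have A: "G_obj qp qm gqm mu Psi c x \<le> WMEE qp qm mu Psi x"
    if x: "x \<in> nonneg_orthant" and c: "c \<in> nonneg_orthant" for x c
    unfolding G_obj_def WMEE_def
  proof (rule Min_range_mono)
    fix k
    have "0 < mu k * x $ k + Psi k" using den[OF x, of k] Psi_pos[of k] by linarith
    moreover have "qp k x - (qm k c + gqm k c \<bullet> (x - c)) \<le> qp k x - qm k x"
      using tq[OF x c, of k] by simp
    ultimately show "(qp k x - (qm k c + gqm k c \<bullet> (x - c))) / (mu k * x $ k + Psi k)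
        \<le> (qp k x - qm k x) / (mu k * x $ k + Psi k)"
      by (simp add: divide_right_mono)
  qed
  have Gself: "\<And>c. G_obj qp qm gqm mu Psi c c = WMEE qp qm mu Psi c"
    by (simp add: G_obj_def WMEE_def)
  have B: "\<And>c. c \<in> feasible_P Pmax cp cm \<Longrightarrow> c \<in> feasible_G Pmax cp cm gcm c"
    by (simp add: feasible_P_def feasible_G_def)
  have feas: "p j \<in> feasible_P Pmax cp cm" for j
  proof (induction j)
    case 0 then show ?case using p0 .
  next
    case (Suc j)
    have s: "pstar j \<in> feasible_G Pmax cp cm gcm (p j)" using opt by blast
    have so: "pstar j \<in> nonneg_orthant" using s GO by blast
    have po: "p j \<in> nonneg_orthant" using Suc PO by blast
    have "\<forall>k. 0 \<le> pstar j $ k \<and> pstar j $ k \<le> Pmax k \<and> cp k (pstar j) - cm k (pstar j) \<ge> 0"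
    proof
      fix k
      show "0 \<le> pstar j $ k \<and> pstar j $ k \<le> Pmax k \<and> cp k (pstar j) - cm k (pstar j) \<ge> 0"
        using s tc[OF so po, of k] unfolding feasible_G_def by (smt (verit) mem_Collect_eq)
    qed
    thus ?case using step[of j] by (simp add: feasible_P_def)
  qed
  have mono: "WMEE qp qm mu Psi (pstar j) \<le> WMEE qp qm mu Psi (pstar (Suc j))" for j
  proof -
    have pS: "p (Suc j) \<in> feasible_P Pmax cp cm" by (rule feas)
    have so: "pstar (Suc j) \<in> nonneg_orthant" using opt GO by blast
    have "WMEE qp qm mu Psi (pstar j) = G_obj qp qm gqm mu Psi (p (Suc j)) (p (Suc j))"
      using Gself step by simp
    also have "\<dots> \<le> G_obj qp qm gqm mu Psi (p (Suc j)) (pstar (Suc j))"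
      using opt[of "Suc j"] B[OF pS] by blast
    also have "\<dots> \<le> WMEE qp qm mu Psi (pstar (Suc j))"
      using A[OF so] pS PO by blast
    finally show ?thesis .
  qed
  have inc: "incseq (\<lambda>j. WMEE qp qm mu Psi (pstar j))"
    using mono by (rule incseq_SucI)
  define k0 :: 'k where "k0 = undefined"
  define box :: "(real^'k) set" where "box = cbox 0 (\<chi> k. Pmax k)"
  have boxO: "box \<subseteq> nonneg_orthant"
    by (auto simp: box_def mem_box_cart nonneg_orthant_def)
  have "continuous_on nonneg_orthant (qp k0)"
    using diff_qp by (meson continuous_on_eq_continuous_within differentiable_imp_continuous_within)
  hence "continuous_on box (qp k0)" using boxO continuous_on_subset by blast
  hence "compact (qp k0 ` box)" by (intro compact_continuous_image) (simp_all add: box_def)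
  hence "bounded (qp k0 ` box)" by (rule compact_imp_bounded)
  then obtain M where M: "\<And>x. x \<in> box \<Longrightarrow> \<bar>qp k0 x\<bar> \<le> M"
    unfolding bounded_iff by auto
  have bnd: "WMEE qp qm mu Psi (pstar j) \<le> M / Psi k0" for j
  proof -
    have pf: "pstar j \<in> feasible_P Pmax cp cm" using feas[of "Suc j"] step by simp
    hence xb: "pstar j \<in> box" by (auto simp: feasible_P_def box_def mem_box_cart)
    let ?x = "pstar j"
    have xo: "?x \<in> nonneg_orthant" using xb boxO by blast
    have nn: "qp k0 ?x \<ge> 0" "qm k0 ?x \<ge> 0" using nonneg[OF xo] by auto
    have d: "Psi k0 \<le> mu k0 * ?x $ k0 + Psi k0" by (rule den[OF xo])
    have ps: "0 < Psi k0" by (rule Psi_pos)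
    have "WMEE qp qm mu Psi ?x \<le> (qp k0 ?x - qm k0 ?x) / (mu k0 * ?x $ k0 + Psi k0)"
      unfolding WMEE_def by (rule Min_le) auto
    also have "\<dots> \<le> qp k0 ?x / (mu k0 * ?x $ k0 + Psi k0)"
      using nn d ps by (intro divide_right_mono) auto
    also have "\<dots> \<le> qp k0 ?x / Psi k0"
      using nn d ps by (intro divide_left_mono) auto
    also have "\<dots> \<le> M / Psi k0"
      using M[OF xb] ps by (intro divide_right_mono) auto
    finally show ?thesis .
  qed
  obtain L where "(\<lambda>j. WMEE qp qm mu Psi (pstar j)) \<longlonglongrightarrow> L"
    using incseq_convergent[OF inc] bnd by blast
  hence "convergent (\<lambda>j. WMEE qp qm mu Psi (pstar j))" by (auto simp: convergent_def)
  with inc show ?thesis by blast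
qed

end
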